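(* Suppose the following statement (A) holds: for all positive integers $n,r$, every simple edge-coloured graph $G$ with $n$ vertices and $n$ colours, in which each colour class has size at least $r$, contains a cycle $C$ of length at most $\lceil n/r\rceil$ such that no two edges of $C$ that share a vertex have the same colour. Then the following statement (B) holds: for all positive integers $n,r$, every simple digraph with $n$ vertices and minimum outdegree at least $r$ contains a directed cycle of length at most $\lceil n/r\rceil$.
   Context: Graphs may have parallel edges. An edge-coloured graph is simple if no colour class contains two parallel edges. A colour class is the set of edges receiving a given colour. A digraph is simple if for all vertices $u,v$ there is at most one arc from $u$ to $v$. *)

theory Defs
  imports Complex_Main
begin

text \<open>Parallel edges are allowed (same e, different c); the set
  representation makes each colour class a simple graph, i.e. the coloured graph is simple.\<close>

definition simple_ecg :: "nat set \<Rightarrow> nat set \<Rightarrow> (nat set \<times> nat) set \<Rightarrow> bool" where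
  "simple_ecg V K E \<longleftrightarrow> finite V \<and> (\<forall>(e, c) \<in> E. e \<subseteq> V \<and> card e = 2 \<and> c \<in> K)"

definition colour_class :: "(nat set \<times> nat) set \<Rightarrow> nat \<Rightarrow> nat set set" where
  "colour_class E c = {e. (e, c) \<in> E}"

definition cyc_edge :: "nat list \<Rightarrow> nat list \<Rightarrow> nat \<Rightarrow> nat set \<times> nat" where
  "cyc_edge vs cs i = ({vs ! i, vs ! ((i + 1) mod length vs)}, cs ! i)"

definition ecg_cycle :: "(nat set \<times> nat) set \<Rightarrow> nat list \<Rightarrow> nat list \<Rightarrow> bool" where
  "ecg_cycle E vs cs \<longleftrightarrow> length cs = length vs \<and> length vs \<ge> 2 \<and> distinct vs
     \<and> distinct (map (cyc_edge vs cs) [0..<length vs])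
     \<and> (\<forall>i < length vs. cyc_edge vs cs i \<in> E)"

text \<open>No two edges of the cycle that share a vertex have the same colour
  (edges of a cycle sharing a vertex are exactly the cyclically consecutive ones).\<close>
definition properly_coloured_cycle :: "nat list \<Rightarrow> nat list \<Rightarrow> bool" where
  "properly_coloured_cycle vs cs \<longleftrightarrow>
     (\<forall>i < length vs. cs ! i \<noteq> cs ! ((i + 1) mod length vs))"

definition simple_digraph :: "nat set \<Rightarrow> (nat \<times> nat) set \<Rightarrow> bool" where
  "simple_digraph V A \<longleftrightarrow> finite V \<and> A \<subseteq> V \<times> V \<and> (\<forall>v. (v, v) \<notin> A)"

definition out_degree :: "(nat \<times> nat) set \<Rightarrow> nat \<Rightarrow> nat" where
  "out_degree A v = card {w. (v, w) \<in> A}"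

definition directed_cycle :: "(nat \<times> nat) set \<Rightarrow> nat list \<Rightarrow> bool" where
  "directed_cycle A vs \<longleftrightarrow> length vs \<ge> 2 \<and> distinct vs
     \<and> (\<forall>i < length vs. (vs ! i, vs ! ((i + 1) mod length vs)) \<in> A)"

definition statement_A :: bool where
  "statement_A \<longleftrightarrow>
    (\<forall>(n::nat) (r::nat) V K E. n > 0 \<and> r > 0 \<and> finite V \<and> card V = n \<and> card K = n
       \<and> simple_ecg V K E \<and> (\<forall>c \<in> K. card (colour_class E c) \<ge> r)
       \<longrightarrow> (\<exists>vs cs. ecg_cycle E vs cs \<and> properly_coloured_cycle vs cs
              \<and> int (length vs) \<le> \<lceil>real n / real r\<rceil>))"

definition statement_B :: bool where
  "statement_B \<longleftrightarrow>
    (\<forall>(n::nat) (r::nat) V A. n > 0 \<and> r > 0 \<and> finite V \<and> card V = n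
       \<and> simple_digraph V A \<and> (\<forall>v \<in> V. out_degree A v \<ge> r)
       \<longrightarrow> (\<exists>vs. directed_cycle A vs \<and> int (length vs) \<le> \<lceil>real n / real r\<rceil>))"

end

theory Submission
  imports Defs
begin

lemma doubleton_inj:
  assumes "{v, w} = {v, w'::nat}" "w \<noteq> v" "w' \<noteq> v"
  shows "w = w'"
  using assms by (metis doubleton_eq_iff)

theorem mainTheorem1:
  assumes "statement_A"
  shows "statement_B"
  unfolding statement_B_def
proof (intro allI impI, elim conjE)
  fix n r :: nat and V and A :: "(nat \<times> nat) set"
  assume n0: "n > 0" and r0: "r > 0" and fV: "finite V" and cV: "card V = n"
    and sd: "simple_digraph V A" and od: "\<forall>v\<in>V. r \<le> out_degree A v"
  have AV: "A \<subseteq> V \<times> V" and irr: "\<And>v. (v, v) \<notin> A" using sd by (auto simp: simple_digraph_def)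
  define E where "E = (\<lambda>(v, w). ({v, w}, v)) ` A"
  have Emem: "\<And>e c. (e, c) \<in> E \<longleftrightarrow> (\<exists>w. (c, w) \<in> A \<and> e = {c, w})"
    unfolding E_def by auto
  have simp: "simple_ecg V V E"
    unfolding simple_ecg_def using fV AV irr by (auto simp: Emem card_insert_if)
  have cc: "card (colour_class E v) \<ge> r" if "v \<in> V" for v
  proof -
    have "colour_class E v = (\<lambda>w. {v, w}) ` {w. (v, w) \<in> A}"
      unfolding colour_class_def by (auto simp: Emem)
    moreover have "inj_on (\<lambda>w. {v, w}) {w. (v, w) \<in> A}"
      by (rule inj_onI) (metis doubleton_inj irr mem_Collect_eq)
    ultimately have "card (colour_class E v) = out_degree A v"
      by (simp add: card_image out_degree_def)
    thus ?thesis using od that by simp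
  qed
  from assms[unfolded statement_A_def, rule_format, of n r V V E] n0 r0 fV cV simp cc
  obtain vs cs where cyc: "ecg_cycle E vs cs" and pc: "properly_coloured_cycle vs cs"
    and len: "int (length vs) \<le> \<lceil>real n / real r\<rceil>" by blast
  define k where "k = length vs"
  have k2: "k \<ge> 2" and dvs: "distinct vs" and inE: "\<And>i. i < k \<Longrightarrow> cyc_edge vs cs i \<in> E"
    using cyc unfolding ecg_cycle_def k_def by auto
  have pc': "\<And>i. i < k \<Longrightarrow> cs ! i \<noteq> cs ! ((i + 1) mod k)"
    using pc unfolding properly_coloured_cycle_def k_def by auto
  have edge: "(cs ! i = vs ! i \<and> (vs ! i, vs ! ((i+1) mod k)) \<in> A)
       \<or> (cs ! i = vs ! ((i+1) mod k) \<and> (vs ! ((i+1) mod k), vs ! i) \<in> A)" if i: "i < k" for i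
  proof -
    from inE[OF i] obtain w where w: "(cs ! i, w) \<in> A" "{vs ! i, vs ! ((i + 1) mod k)} = {cs ! i, w}"
      unfolding cyc_edge_def k_def by (auto simp: Emem)
    thus ?thesis by (auto simp: doubleton_eq_iff)
  qed
  have propg: "cs ! ((i+1) mod k) \<noteq> vs ! ((i+1) mod k)" if i: "i < k" and b: "cs ! i \<noteq> vs ! i" for i
  proof -
    have "cs ! i = vs ! ((i+1) mod k)" using b edge[OF i] by auto
    thus ?thesis using pc'[OF i] by auto
  qed
  show "\<exists>vs. directed_cycle A vs \<and> int (length vs) \<le> \<lceil>real n / real r\<rceil>"
  proof (cases "\<forall>i<k. cs ! i = vs ! i")
    case True
    have "(vs ! j, vs ! ((j + 1) mod k)) \<in> A" if j: "j < k" for j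
    proof -
      have ne: "j \<noteq> (j + 1) mod k" using j k2
        by (cases "j + 1 < k") (auto simp: mod_if)
      have lt: "(j + 1) mod k < k" using k2 by simp
      have "vs ! j \<noteq> vs ! ((j + 1) mod k)"
        using nth_eq_iff_index_eq[of vs j "(j+1) mod k"] dvs ne j lt unfolding k_def by blast
      thus ?thesis using edge[OF j] True j by auto
    qed
    hence "directed_cycle A vs"
      unfolding directed_cycle_def using k2 dvs unfolding k_def by auto
    thus ?thesis using len by blast
  next
    case False
    then obtain i where i: "i < k" "cs ! i \<noteq> vs ! i" by auto
    have all: "cs ! ((i + m) mod k) \<noteq> vs ! ((i + m) mod k)" for m
    proof (induction m)
      case 0 then show ?case using i by simp
    next
      case (Suc m)
      have "(i + m) mod k < k" using k2 by simp
      from propg[OF this Suc] show ?case by (simp add: mod_Suc_eq)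
    qed
    have bw: "cs ! j \<noteq> vs ! j" if "j < k" for j
    proof -
      have "i + (k - i + j) = j + k" using that i by simp
      hence "(i + (k - i + j)) mod k = j" using that by simp
      thus ?thesis using all[of "k - i + j"] by simp
    qed
    have bkw: "(vs ! ((j+1) mod k), vs ! j) \<in> A" if "j < k" for j
      using edge[OF that] bw[OF that] by auto
    have "directed_cycle A (rev vs)"
      unfolding directed_cycle_def
    proof (intro conjI allI impI)
      show "2 \<le> length (rev vs)" using k2 k_def by simp
      show "distinct (rev vs)" using dvs by simp
      fix j assume j: "j < length (rev vs)"
      hence jk: "j < k" by (simp add: k_def)
      show "(rev vs ! j, rev vs ! ((j + 1) mod length (rev vs))) \<in> A"
      proof (cases "j + 1 < k")
        case True
        have "(vs ! ((k - 2 - j + 1) mod k), vs ! (k - 2 - j)) \<in> A" using bkw[of "k-2-j"] True by simp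
        moreover have "(k - 2 - j + 1) mod k = k - 1 - j" using True by simp
        ultimately show ?thesis using True jk by (simp add: rev_nth k_def Suc_diff_Suc numeral_2_eq_2)
      next
        case False
        hence "j = k - 1" using jk by simp
        moreover have "(vs ! 0, vs ! (k - 1)) \<in> A" using bkw[of "k-1"] k2 by simp
        moreover have "Suc (k - 1) = k" using k2 by simp
        moreover have "rev vs ! 0 = vs ! (k - 1)" using k2 rev_nth[of 0 vs] unfolding k_def by force
        ultimately show ?thesis using k2 by (simp add: rev_nth k_def)
      qed
    qed
    thus ?thesis using len by auto
  qed
qed

end
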